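(* Let $a\in K$ be such that $K$ is finite-dimensional as a right vector space over $C(a)=\{b\in K^*:{}^{b}a=a\}\cup\{0\}$. Then a skew rational function with minimal representation $P(T)^{-1}Q(T)$ is defined at $a$ if and only if $P(c)\neq0$ for all $c\in\Delta(a)$.
   Context: Let $K$ be a skew field, $K^*=K\setminus\{0\}$, $\sigma\colon K\to K$ a ring endomorphism and $\delta\colon K\to K$ a $\sigma$-derivation. $K[T;\sigma,\delta]$ is the skew polynomial ring with $Ta=\sigma(a)T+\delta(a)$. The $(\sigma,\delta)$-action of $K^*$ on $K$ is ${}^{b}a=\sigma(b)ab^{-1}+\delta(b)b^{-1}$; $\Delta(a)=\{{}^{b}a:b\in K^*\}$. $C(a)$ is a skew subfield of $K$. For $P\in K[T;\sigma,\delta]$ and $a\in K$, $P(a)$ is the unique element of $K$ with $P(T)-P(a)\in K[T;\sigma,\delta](T-a)$. For a set $Z$ with a $K^*$-action, the skew product of functions $Z\to K$ is $(f\diamond g)(z)=f({}^{g(z)}z)g(z)$ if $g(z)\neq0$, $0$ otherwise; $f$ is skew invertible if some $g$ satisfies $f\diamond g=g\diamond f=1$. $K(T;\sigma,\delta)$ is the division ring of left fractions of $K[T;\sigma,\delta]$; each $f$ has a unique minimal representation $P(T)^{-1}Q(T)$ with $P$ monic of least degree; $f$ is defined at $a$ if the function $\Delta(a)\to K$, $c\mapsto P(c)$, is skew invertible. *)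

theory Defs
  imports "HOL-Computational_Algebra.Polynomial"
begin

text \<open>Skew polynomials over a skew field 'a (class division_ring) are represented by
the type 'a poly of finitely supported coefficient sequences, P = sum_i p_i T^i with
coefficients written on the left. Multiplication is the skew multiplication determined by
T a = sigma(a) T + delta(a); it is defined below and NOT the commutative poly product.\<close>

definition ring_endo :: "('a::division_ring \<Rightarrow> 'a) \<Rightarrow> bool" where
  "ring_endo \<sigma> \<longleftrightarrow> \<sigma> 1 = 1 \<and> (\<forall>x y. \<sigma> (x + y) = \<sigma> x + \<sigma> y) \<and> (\<forall>x y. \<sigma> (x * y) = \<sigma> x * \<sigma> y)"

definition sigma_derivation :: "('a::division_ring \<Rightarrow> 'a) \<Rightarrow> ('a \<Rightarrow> 'a) \<Rightarrow> bool" where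
  "sigma_derivation \<sigma> \<delta> \<longleftrightarrow> (\<forall>x y. \<delta> (x + y) = \<delta> x + \<delta> y) \<and>
     (\<forall>x y. \<delta> (x * y) = \<sigma> x * \<delta> y + \<delta> x * y)"

text \<open>T^n * b, as a skew polynomial.\<close>
primrec Tpow_times :: "('a::division_ring \<Rightarrow> 'a) \<Rightarrow> ('a \<Rightarrow> 'a) \<Rightarrow> nat \<Rightarrow> 'a \<Rightarrow> 'a poly" where
  "Tpow_times \<sigma> \<delta> 0 b = [:b:]"
| "Tpow_times \<sigma> \<delta> (Suc n) b =
     (let q = Tpow_times \<sigma> \<delta> n b in
      (\<Sum>k\<le>degree q. monom (\<sigma> (coeff q k)) (Suc k) + monom (\<delta> (coeff q k)) k))"

text \<open>(a T^i) * (b T^j)\<close>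
definition mono_mult :: "('a::division_ring \<Rightarrow> 'a) \<Rightarrow> ('a \<Rightarrow> 'a) \<Rightarrow> 'a \<Rightarrow> nat \<Rightarrow> 'a \<Rightarrow> nat \<Rightarrow> 'a poly" where
  "mono_mult \<sigma> \<delta> a i b j =
     (let c = Tpow_times \<sigma> \<delta> i b in (\<Sum>k\<le>degree c. monom (a * coeff c k) (k + j)))"

definition skmult :: "('a::division_ring \<Rightarrow> 'a) \<Rightarrow> ('a \<Rightarrow> 'a) \<Rightarrow> 'a poly \<Rightarrow> 'a poly \<Rightarrow> 'a poly" where
  "skmult \<sigma> \<delta> p q = (\<Sum>i\<le>degree p. \<Sum>j\<le>degree q. mono_mult \<sigma> \<delta> (coeff p i) i (coeff q j) j)"

definition skeval :: "('a::division_ring \<Rightarrow> 'a) \<Rightarrow> ('a \<Rightarrow> 'a) \<Rightarrow> 'a poly \<Rightarrow> 'a \<Rightarrow> 'a" where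
  "skeval \<sigma> \<delta> P a = (THE r. \<exists>Q. P - [:r:] = skmult \<sigma> \<delta> Q [:- a, 1:])"

definition sd_act :: "('a::division_ring \<Rightarrow> 'a) \<Rightarrow> ('a \<Rightarrow> 'a) \<Rightarrow> 'a \<Rightarrow> 'a \<Rightarrow> 'a" where
  "sd_act \<sigma> \<delta> b a = \<sigma> b * a * inverse b + \<delta> b * inverse b"

definition conj_class :: "('a::division_ring \<Rightarrow> 'a) \<Rightarrow> ('a \<Rightarrow> 'a) \<Rightarrow> 'a \<Rightarrow> 'a set" where
  "conj_class \<sigma> \<delta> a = {sd_act \<sigma> \<delta> b a | b. b \<noteq> 0}"

definition centralizer :: "('a::division_ring \<Rightarrow> 'a) \<Rightarrow> ('a \<Rightarrow> 'a) \<Rightarrow> 'a \<Rightarrow> 'a set" where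
  "centralizer \<sigma> \<delta> a = {b. b \<noteq> 0 \<and> sd_act \<sigma> \<delta> b a = a} \<union> {0}"

definition fin_dim_right_over :: "'a::division_ring set \<Rightarrow> bool" where
  "fin_dim_right_over F \<longleftrightarrow> (\<exists>B. finite B \<and> (\<forall>x. \<exists>c. (\<forall>b\<in>B. c b \<in> F) \<and> x = (\<Sum>b\<in>B. b * c b)))"

definition skew_prod :: "('a::division_ring \<Rightarrow> 'a) \<Rightarrow> ('a \<Rightarrow> 'a) \<Rightarrow> ('a \<Rightarrow> 'a) \<Rightarrow> ('a \<Rightarrow> 'a) \<Rightarrow> 'a \<Rightarrow> 'a" where
  "skew_prod \<sigma> \<delta> f g z = (if g z \<noteq> 0 then f (sd_act \<sigma> \<delta> (g z) z) * g z else 0)"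

definition skew_invertible_on :: "('a::division_ring \<Rightarrow> 'a) \<Rightarrow> ('a \<Rightarrow> 'a) \<Rightarrow> 'a set \<Rightarrow> ('a \<Rightarrow> 'a) \<Rightarrow> bool" where
  "skew_invertible_on \<sigma> \<delta> Z f \<longleftrightarrow>
     (\<exists>g. \<forall>z\<in>Z. skew_prod \<sigma> \<delta> f g z = 1 \<and> skew_prod \<sigma> \<delta> g f z = 1)"

text \<open>Equality of left fractions P^{-1}Q = P'^{-1}Q' in K(T;sigma,delta).\<close>
definition same_fraction :: "('a::division_ring \<Rightarrow> 'a) \<Rightarrow> ('a \<Rightarrow> 'a) \<Rightarrow> 'a poly \<Rightarrow> 'a poly \<Rightarrow> 'a poly \<Rightarrow> 'a poly \<Rightarrow> bool" where
  "same_fraction \<sigma> \<delta> P Q P' Q' \<longleftrightarrow>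
     (\<exists>u u'. u \<noteq> 0 \<and> u' \<noteq> 0 \<and> skmult \<sigma> \<delta> u P = skmult \<sigma> \<delta> u' P' \<and> skmult \<sigma> \<delta> u Q = skmult \<sigma> \<delta> u' Q')"

definition minimal_rep :: "('a::division_ring \<Rightarrow> 'a) \<Rightarrow> ('a \<Rightarrow> 'a) \<Rightarrow> 'a poly \<Rightarrow> 'a poly \<Rightarrow> bool" where
  "minimal_rep \<sigma> \<delta> P Q \<longleftrightarrow> lead_coeff P = 1 \<and>
     (\<forall>P' Q'. P' \<noteq> 0 \<and> same_fraction \<sigma> \<delta> P Q P' Q' \<longrightarrow> degree P \<le> degree P')"

definition defined_at :: "('a::division_ring \<Rightarrow> 'a) \<Rightarrow> ('a \<Rightarrow> 'a) \<Rightarrow> 'a poly \<Rightarrow> 'a \<Rightarrow> bool" where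
  "defined_at \<sigma> \<delta> P a \<longleftrightarrow> skew_invertible_on \<sigma> \<delta> (conj_class \<sigma> \<delta> a) (\<lambda>c. skeval \<sigma> \<delta> P c)"

end

theory Submission imports Defs begin

locale sd =
  fixes \<sigma> \<delta> :: "'a::division_ring \<Rightarrow> 'a"
  assumes endo: "ring_endo \<sigma>" and der: "sigma_derivation \<sigma> \<delta>"
begin

lemma s_add: "\<sigma> (x + y) = \<sigma> x + \<sigma> y" using endo by (simp add: ring_endo_def)
lemma s_mult: "\<sigma> (x * y) = \<sigma> x * \<sigma> y" using endo by (simp add: ring_endo_def)
lemma s_one[simp]: "\<sigma> 1 = 1" using endo by (simp add: ring_endo_def)
lemma d_add: "\<delta> (x + y) = \<delta> x + \<delta> y" using der by (simp add: sigma_derivation_def)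
lemma d_mult: "\<delta> (x * y) = \<sigma> x * \<delta> y + \<delta> x * y" using der by (simp add: sigma_derivation_def)
lemma s_zero[simp]: "\<sigma> 0 = 0" using s_add[of 0 0] by simp
lemma d_zero[simp]: "\<delta> 0 = 0" using d_add[of 0 0] by simp
lemma d_one[simp]: "\<delta> 1 = 0" using d_mult[of 1 1] by simp
lemma s_uminus: "\<sigma> (- x) = - \<sigma> x" using s_add[of x "-x"] by (simp add: minus_unique)
lemma d_uminus: "\<delta> (- x) = - \<delta> x" using d_add[of x "-x"] by (simp add: minus_unique)
lemma s_diff: "\<sigma> (x - y) = \<sigma> x - \<sigma> y" using s_add[of x "-y"] s_uminus by simp
lemma d_diff: "\<delta> (x - y) = \<delta> x - \<delta> y" using d_add[of x "-y"] d_uminus by simp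
lemma s_sum: "\<sigma> (sum f A) = (\<Sum>x\<in>A. \<sigma> (f x))"
  by (induction A rule: infinite_finite_induct) (auto simp: s_add)
lemma d_sum: "\<delta> (sum f A) = (\<Sum>x\<in>A. \<delta> (f x))"
  by (induction A rule: infinite_finite_induct) (auto simp: d_add)
lemma s_inv: "x \<noteq> 0 \<Longrightarrow> \<sigma> (inverse x) * \<sigma> x = 1"
  using s_mult[of "inverse x" x] by simp
lemma s_nz: "x \<noteq> 0 \<Longrightarrow> \<sigma> x \<noteq> 0"
  using s_inv by force
lemma s_inverse: "x \<noteq> 0 \<Longrightarrow> \<sigma> (inverse x) = inverse (\<sigma> x)"
  using s_inv s_nz by (metis inverse_unique mult.commute nonzero_inverse_inverse_eq s_mult right_inverse s_one)

definition th :: "'a \<Rightarrow> 'a \<Rightarrow> 'a" where "th z x = \<sigma> x * z + \<delta> x"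

lemma th_add: "th z (x + y) = th z x + th z y"
  by (simp add: th_def s_add d_add algebra_simps)
lemma th_zero[simp]: "th z 0 = 0" by (simp add: th_def)
lemma th_uminus: "th z (- x) = - th z x"
  by (simp add: th_def s_uminus d_uminus)
lemma th_sum: "th z (sum f A) = (\<Sum>x\<in>A. th z (f x))"
  by (induction A rule: infinite_finite_induct) (auto simp: th_add)
lemma th_one[simp]: "th z 1 = z" by (simp add: th_def)
lemma th_mult: "th z (x * y) = \<sigma> x * th z y + \<delta> x * y"
  by (simp add: th_def s_mult d_mult algebra_simps)

lemma thp_add: "(th z ^^ n) (x + y) = (th z ^^ n) x + (th z ^^ n) y"
  by (induction n) (auto simp: th_add)
lemma thp_zero[simp]: "(th z ^^ n) 0 = 0"
  by (induction n) auto
lemma thp_uminus: "(th z ^^ n) (- x) = - (th z ^^ n) x"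
  by (induction n) (auto simp: th_uminus)
lemma thp_diff: "(th z ^^ n) (x - y) = (th z ^^ n) x - (th z ^^ n) y"
  by (metis diff_conv_add_uminus thp_add thp_uminus)
lemma thp_sum: "(th z ^^ n) (sum f A) = (\<Sum>x\<in>A. (th z ^^ n) (f x))"
  by (induction A rule: infinite_finite_induct) (auto simp: thp_add)

definition N :: "'a \<Rightarrow> nat \<Rightarrow> 'a" where "N z k = (th z ^^ k) 1"

definition ev :: "'a \<Rightarrow> 'a poly \<Rightarrow> 'a" where
  "ev z R = (\<Sum>k\<le>degree R. coeff R k * N z k)"

lemma ev_bound: "degree R \<le> M \<Longrightarrow> ev z R = (\<Sum>k\<le>M. coeff R k * N z k)"
proof -
  assume "degree R \<le> M"
  then have "(\<Sum>k\<le>M. coeff R k * N z k) = (\<Sum>k\<le>degree R. coeff R k * N z k)"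
    by (intro sum.mono_neutral_right) (auto simp: coeff_eq_0)
  then show ?thesis by (simp add: ev_def)
qed

lemma ev_add: "ev z (A + B) = ev z A + ev z B"
proof -
  let ?M = "max (degree A) (degree B)"
  have "ev z (A + B) = (\<Sum>k\<le>?M. coeff (A+B) k * N z k)"
    by (rule ev_bound) (simp add: degree_add_le)
  also have "\<dots> = (\<Sum>k\<le>?M. coeff A k * N z k) + (\<Sum>k\<le>?M. coeff B k * N z k)"
    by (simp add: distrib_right sum.distrib)
  also have "\<dots> = ev z A + ev z B"
    using ev_bound[of A ?M z] ev_bound[of B ?M z] by simp
  finally show ?thesis .
qed
lemma ev_zero[simp]: "ev z 0 = 0" by (simp add: ev_def)
lemma ev_uminus: "ev z (- A) = - ev z A"
  using ev_add[of z A "-A"] by (simp add: minus_unique)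
lemma ev_diff: "ev z (A - B) = ev z A - ev z B"
  by (metis diff_conv_add_uminus ev_add ev_uminus)
lemma ev_sum: "ev z (sum f S) = (\<Sum>x\<in>S. ev z (f x))"
  by (induction S rule: infinite_finite_induct) (auto simp: ev_add)
lemma ev_monom: "ev z (monom c k) = c * N z k"
proof -
  have "ev z (monom c k) = (\<Sum>i\<le>k. coeff (monom c k) i * N z i)"
    by (rule ev_bound) (simp add: degree_monom_le)
  also have "\<dots> = (\<Sum>i\<le>k. if i = k then c * N z k else 0)" by (rule sum.cong) auto
  also have "\<dots> = c * N z k" by simp
  finally show ?thesis .
qed
lemma ev_const: "ev z [:r:] = r"
  by (simp add: ev_def N_def)

lemma ev_Tpow: "ev z (Tpow_times \<sigma> \<delta> n b) = (th z ^^ n) b"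
proof (induction n)
  case 0
  then show ?case by (simp add: ev_const)
next
  case (Suc n)
  define q where "q = Tpow_times \<sigma> \<delta> n b"
  have "ev z (Tpow_times \<sigma> \<delta> (Suc n) b) =
     (\<Sum>k\<le>degree q. \<sigma> (coeff q k) * N z (Suc k) + \<delta> (coeff q k) * N z k)"
    by (simp add: q_def[symmetric] Let_def ev_sum ev_add ev_monom)
  also have "\<dots> = (\<Sum>k\<le>degree q. th z (coeff q k * N z k))"
    by (simp add: th_mult N_def)
  also have "\<dots> = th z (ev z q)" by (simp add: th_sum ev_def)
  finally show ?case using Suc by (simp add: q_def)
qed

lemma Tpow_one: "Tpow_times \<sigma> \<delta> n 1 = monom 1 n"
proof (induction n)
  case 0
  then show ?case by (simp add: monom_0)
next
  case (Suc n)
  have "Tpow_times \<sigma> \<delta> (Suc n) 1 =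
    (\<Sum>k\<le>n. monom (\<sigma> (coeff (monom 1 n) k)) (Suc k) + monom (\<delta> (coeff (monom 1 n) k)) k)"
    by (simp add: Suc Let_def degree_monom_eq)
  also have "\<dots> = (\<Sum>k\<le>n. if k = n then monom 1 (Suc n) else 0)"
    by (rule sum.cong) auto
  also have "\<dots> = monom 1 (Suc n)" by simp
  finally show ?case .
qed

lemma deg_Tpow: "degree (Tpow_times \<sigma> \<delta> n b) \<le> n"
proof (induction n)
  case 0
  then show ?case by simp
next
  case (Suc n)
  define q where "q = Tpow_times \<sigma> \<delta> n b"
  have "degree (\<Sum>k\<le>degree q. monom (\<sigma> (coeff q k)) (Suc k) + monom (\<delta> (coeff q k)) k) \<le> Suc n"
  proof (rule degree_sum_le)
    fix k assume "k \<in> {..degree q}"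
    then have k: "k \<le> n" using Suc by (simp add: q_def)
    have "degree (monom (\<sigma> (coeff q k)) (Suc k) + monom (\<delta> (coeff q k)) k) \<le> max (Suc k) k"
      by (intro degree_add_le) (auto intro: le_trans[OF degree_monom_le])
    then show "degree (monom (\<sigma> (coeff q k)) (Suc k) + monom (\<delta> (coeff q k)) k) \<le> Suc n"
      using k by simp
  qed simp
  then show ?case by (simp add: q_def Let_def)
qed

lemma mm_zero[simp]: "mono_mult \<sigma> \<delta> 0 i b j = 0"
  by (simp add: mono_mult_def)

lemma mm_add: "mono_mult \<sigma> \<delta> (c + c') i b j = mono_mult \<sigma> \<delta> c i b j + mono_mult \<sigma> \<delta> c' i b j"
  by (simp add: mono_mult_def Let_def distrib_right add_monom[symmetric] sum.distrib)

lemma ev_mm0: "ev z (mono_mult \<sigma> \<delta> c i b 0) = c * (th z ^^ i) b"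
proof -
  have "ev z (mono_mult \<sigma> \<delta> c i b 0) = (\<Sum>k\<le>degree (Tpow_times \<sigma> \<delta> i b). c * coeff (Tpow_times \<sigma> \<delta> i b) k * N z k)"
    by (simp add: mono_mult_def Let_def ev_sum ev_monom)
  also have "\<dots> = c * ev z (Tpow_times \<sigma> \<delta> i b)"
    by (simp add: ev_def sum_distrib_left mult.assoc)
  finally have "ev z (mono_mult \<sigma> \<delta> c i b 0) = c * ev z (Tpow_times \<sigma> \<delta> i b)" .
  then show ?thesis by (simp add: ev_Tpow)
qed

lemma mm_one: "mono_mult \<sigma> \<delta> c i 1 1 = monom c (Suc i)"
proof -
  have "mono_mult \<sigma> \<delta> c i 1 1 = (\<Sum>k\<le>i. monom (c * coeff (monom 1 i) k) (k + 1))"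
    by (simp add: mono_mult_def Tpow_one degree_monom_eq)
  also have "\<dots> = (\<Sum>k\<le>i. if k = i then monom c (Suc i) else 0)"
    by (rule sum.cong) auto
  finally show ?thesis by simp
qed

lemma deg_mm0: "degree (mono_mult \<sigma> \<delta> c i b 0) \<le> i"
  unfolding mono_mult_def Let_def
proof (rule degree_sum_le)
  fix k assume "k \<in> {..degree (Tpow_times \<sigma> \<delta> i b)}"
  then have "k \<le> i" using deg_Tpow[of i b] by simp
  then show "degree (monom (c * coeff (Tpow_times \<sigma> \<delta> i b) k) (k + 0)) \<le> i"
    using degree_monom_le[of "c * coeff (Tpow_times \<sigma> \<delta> i b) k" "k+0"] by simp
qed simp

definition G :: "'a \<Rightarrow> 'a \<Rightarrow> nat \<Rightarrow> 'a poly" where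
  "G z c i = mono_mult \<sigma> \<delta> c i (- z) 0 + mono_mult \<sigma> \<delta> c i 1 1"

lemma G_zero[simp]: "G z 0 i = 0" by (simp add: G_def)
lemma G_add: "G z (c + c') i = G z c i + G z c' i" by (simp add: G_def mm_add algebra_simps)

lemma sum_le1: "(\<Sum>j\<le>(1::nat). f j) = f 0 + (f 1 :: 'b::comm_monoid_add)"
  by (simp add: numeral_eq_Suc atMost_Suc add.commute)

lemma sk_L: "skmult \<sigma> \<delta> Q [:- z, 1:] = (\<Sum>i\<le>degree Q. G z (coeff Q i) i)"
  by (simp add: skmult_def sum_le1 G_def)

lemma sk_bound: "degree Q \<le> M \<Longrightarrow> skmult \<sigma> \<delta> Q [:- z, 1:] = (\<Sum>i\<le>M. G z (coeff Q i) i)"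
  unfolding sk_L by (intro sum.mono_neutral_left) (auto simp: coeff_eq_0)

lemma sk_add: "skmult \<sigma> \<delta> (A + B) [:- z, 1:] = skmult \<sigma> \<delta> A [:- z, 1:] + skmult \<sigma> \<delta> B [:- z, 1:]"
proof -
  let ?M = "max (degree A) (degree B)"
  have "skmult \<sigma> \<delta> (A + B) [:- z, 1:] = (\<Sum>i\<le>?M. G z (coeff (A + B) i) i)"
    by (rule sk_bound) (simp add: degree_add_le)
  also have "\<dots> = (\<Sum>i\<le>?M. G z (coeff A i) i) + (\<Sum>i\<le>?M. G z (coeff B i) i)"
    by (simp add: G_add sum.distrib)
  also have "\<dots> = skmult \<sigma> \<delta> A [:- z, 1:] + skmult \<sigma> \<delta> B [:- z, 1:]"
    using sk_bound[of A ?M z] sk_bound[of B ?M z] by simp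
  finally show ?thesis .
qed

lemma sk_monom: "skmult \<sigma> \<delta> (monom p m) [:- z, 1:] = G z p m"
proof -
  have "skmult \<sigma> \<delta> (monom p m) [:- z, 1:] = (\<Sum>i\<le>m. G z (coeff (monom p m) i) i)"
    by (rule sk_bound) (simp add: degree_monom_le)
  also have "\<dots> = (\<Sum>i\<le>m. if i = m then G z p m else 0)"
    by (rule sum.cong) auto
  finally show ?thesis by simp
qed

lemma sk_zero: "skmult \<sigma> \<delta> 0 [:- z, 1:] = 0"
  by (simp add: sk_L)

lemma ev_G: "ev z (G z c i) = 0"
proof -
  have "N z (Suc i) = (th z ^^ i) z"
    by (simp add: N_def funpow_Suc_right del: funpow.simps)
  then show ?thesis unfolding G_def mm_one
    by (simp add: ev_add ev_mm0 ev_monom thp_uminus)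
qed

lemma ev_sk: "ev z (skmult \<sigma> \<delta> Q [:- z, 1:]) = 0"
  by (simp add: sk_L ev_sum ev_G)

lemma coeff_G: "coeff (G z p m) (Suc m) = p"
proof -
  have "coeff (mono_mult \<sigma> \<delta> p m (- z) 0) (Suc m) = 0"
    using deg_mm0[of p m "-z"] by (simp add: coeff_eq_0)
  then show ?thesis unfolding G_def mm_one by simp
qed

lemma deg_G: "degree (G z p m) \<le> Suc m"
proof -
  have "degree (mono_mult \<sigma> \<delta> p m (- z) 0) \<le> Suc m" using deg_mm0[of p m "-z"] by simp
  then show ?thesis unfolding G_def mm_one
    by (meson degree_add_le degree_monom_le)
qed

lemma deg_drop: "degree X \<le> Suc m \<Longrightarrow> coeff X (Suc m) = 0 \<Longrightarrow> degree X \<le> m"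
proof (cases "X = 0")
  case False
  assume "degree X \<le> Suc m" "coeff X (Suc m) = 0"
  moreover have "degree X \<noteq> Suc m" using False \<open>coeff X (Suc m) = 0\<close> leading_coeff_neq_0 by metis
  ultimately show ?thesis by simp
qed simp

lemma division_exists: "\<exists>r Q. P - [:r:] = skmult \<sigma> \<delta> Q [:- z, 1:]"
proof (induction "degree P" arbitrary: P rule: less_induct)
  case less
  show ?case
  proof (cases "degree P")
    case 0
    then have "P - [:coeff P 0:] = skmult \<sigma> \<delta> 0 [:- z, 1:]"
      by (simp add: sk_zero) (metis degree_0_id)
    then show ?thesis by blast
  next
    case (Suc m)
    define p where "p = coeff P (Suc m)"
    define P' where "P' = P - G z p m"
    have "degree P' \<le> Suc m" unfolding P'_def using Suc deg_G[of z p m]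
      by (intro degree_diff_le) auto
    moreover have "coeff P' (Suc m) = 0" by (simp add: P'_def coeff_G p_def)
    ultimately have "degree P' < degree P" using deg_drop Suc by fastforce
    then obtain r Q' where "P' - [:r:] = skmult \<sigma> \<delta> Q' [:- z, 1:]" using less by blast
    then have "P - [:r:] = skmult \<sigma> \<delta> (Q' + monom p m) [:- z, 1:]"
      by (simp add: sk_add sk_monom P'_def algebra_simps)
    then show ?thesis by blast
  qed
qed

lemma skeval_ev: "skeval \<sigma> \<delta> P z = ev z P"
  unfolding skeval_def
proof (rule the_equality)
  have uniq: "r = ev z P" if "P - [:r:] = skmult \<sigma> \<delta> Q [:- z, 1:]" for r Q
  proof -
    have "ev z (P - [:r:]) = 0" using that ev_sk by simp
    then show ?thesis by (simp add: ev_diff ev_const)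
  qed
  from division_exists obtain r Q where "P - [:r:] = skmult \<sigma> \<delta> Q [:- z, 1:]" by blast
  with uniq show "\<exists>Q. P - [:ev z P:] = skmult \<sigma> \<delta> Q [:- z, 1:]" by blast
  show "\<And>r. \<exists>Q. P - [:r:] = skmult \<sigma> \<delta> Q [:- z, 1:] \<Longrightarrow> r = ev z P" using uniq by blast
qed

lemma act_one: "sd_act \<sigma> \<delta> 1 z = z" by (simp add: sd_act_def)

lemma act_comp: "b \<noteq> 0 \<Longrightarrow> c \<noteq> 0 \<Longrightarrow> sd_act \<sigma> \<delta> b (sd_act \<sigma> \<delta> c z) = sd_act \<sigma> \<delta> (b * c) z"
proof -
  assume b: "b \<noteq> 0" and c: "c \<noteq> 0"
  have i: "inverse (b * c) = inverse c * inverse b" using b c by (simp add: nonzero_inverse_mult_distrib)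
  have "sd_act \<sigma> \<delta> (b * c) z = \<sigma> b * \<sigma> c * z * (inverse c * inverse b)
     + (\<sigma> b * \<delta> c + \<delta> b * c) * (inverse c * inverse b)"
    by (simp add: sd_act_def s_mult d_mult i)
  also have "\<dots> = \<sigma> b * \<sigma> c * z * inverse c * inverse b + \<sigma> b * \<delta> c * inverse c * inverse b
     + \<delta> b * (c * inverse c) * inverse b"
    by (simp add: algebra_simps)
  also have "\<dots> = sd_act \<sigma> \<delta> b (sd_act \<sigma> \<delta> c z)"
    using c by (simp add: sd_act_def algebra_simps)
  finally show ?thesis by simp
qed

lemma th_act: "c \<noteq> 0 \<Longrightarrow> th (sd_act \<sigma> \<delta> c z) x * c = th z (x * c)"
proof -
  assume c: "c \<noteq> 0"
  have "th (sd_act \<sigma> \<delta> c z) x * c = \<sigma> x * \<sigma> c * z * (inverse c * c) + \<sigma> x * \<delta> c * (inverse c * c) + \<delta> x * c"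
    by (simp add: th_def sd_act_def algebra_simps)
  also have "\<dots> = th z (x * c)" using c by (simp add: th_def s_mult d_mult algebra_simps)
  finally show ?thesis .
qed

lemma thp_act: "c \<noteq> 0 \<Longrightarrow> (th (sd_act \<sigma> \<delta> c z) ^^ k) 1 * c = (th z ^^ k) c"
  by (induction k) (simp_all add: th_act)

lemma cent_iff: "b \<in> centralizer \<sigma> \<delta> a \<longleftrightarrow> \<sigma> b * a + \<delta> b = a * b"
proof (cases "b = 0")
  case False
  have "sd_act \<sigma> \<delta> b a = (\<sigma> b * a + \<delta> b) * inverse b" by (simp add: sd_act_def algebra_simps)
  moreover have "(x * inverse b = a) \<longleftrightarrow> (x = a * b)" for x
  proof
    assume "x * inverse b = a"
    then have "x * inverse b * b = a * b" by simp
    then show "x = a * b" using False by (simp add: mult.assoc)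
  next
    assume "x = a * b"
    then show "x * inverse b = a" using False by (simp add: mult.assoc)
  qed
  ultimately show ?thesis using False by (simp add: centralizer_def)
qed (simp add: centralizer_def)

lemma th_cent: "d \<in> centralizer \<sigma> \<delta> a \<Longrightarrow> th a (x * d) = th a x * d"
proof -
  assume "d \<in> centralizer \<sigma> \<delta> a"
  then have d: "\<sigma> d * a + \<delta> d = a * d" by (simp add: cent_iff)
  have "th a (x * d) = \<sigma> x * (\<sigma> d * a + \<delta> d) + \<delta> x * d"
    by (simp add: th_def s_mult d_mult algebra_simps)
  also have "\<dots> = \<sigma> x * (a * d) + \<delta> x * d" by (simp only: d)
  also have "\<dots> = th a x * d" by (simp add: th_def algebra_simps)
  finally show ?thesis .
qed

lemma thp_cent: "d \<in> centralizer \<sigma> \<delta> a \<Longrightarrow> (th a ^^ k) (x * d) = (th a ^^ k) x * d"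
  by (induction k) (simp_all add: th_cent)

lemma cent_zero: "0 \<in> centralizer \<sigma> \<delta> a" by (simp add: cent_iff)
lemma cent_one: "1 \<in> centralizer \<sigma> \<delta> a" by (simp add: cent_iff)
lemma cent_add: "x \<in> centralizer \<sigma> \<delta> a \<Longrightarrow> y \<in> centralizer \<sigma> \<delta> a \<Longrightarrow> x + y \<in> centralizer \<sigma> \<delta> a"
  by (simp add: cent_iff s_add d_add algebra_simps)
lemma cent_uminus: "x \<in> centralizer \<sigma> \<delta> a \<Longrightarrow> - x \<in> centralizer \<sigma> \<delta> a"
  by (simp add: cent_iff s_uminus d_uminus algebra_simps)
lemma cent_mult: "x \<in> centralizer \<sigma> \<delta> a \<Longrightarrow> y \<in> centralizer \<sigma> \<delta> a \<Longrightarrow> x * y \<in> centralizer \<sigma> \<delta> a"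
proof -
  assume x: "x \<in> centralizer \<sigma> \<delta> a" and y: "y \<in> centralizer \<sigma> \<delta> a"
  have "\<sigma> (x * y) * a + \<delta> (x * y) = \<sigma> x * (\<sigma> y * a + \<delta> y) + \<delta> x * y"
    by (simp add: s_mult d_mult algebra_simps)
  also have "\<dots> = (\<sigma> x * a + \<delta> x) * y" using y by (simp add: cent_iff algebra_simps)
  also have "\<dots> = a * (x * y)" using x by (simp add: cent_iff mult.assoc)
  finally show ?thesis by (simp add: cent_iff)
qed
lemma cent_inverse: "x \<in> centralizer \<sigma> \<delta> a \<Longrightarrow> inverse x \<in> centralizer \<sigma> \<delta> a"
proof (cases "x = 0")
  case False
  assume x: "x \<in> centralizer \<sigma> \<delta> a"
  then have xe: "\<sigma> x * a = a * x - \<delta> x" by (simp add: cent_iff algebra_simps)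
  have "0 = \<delta> (inverse x * x)" using False by simp
  then have "0 = \<sigma> (inverse x) * \<delta> x + \<delta> (inverse x) * x" by (simp add: d_mult)
  then have dinv: "\<delta> (inverse x) = - (\<sigma> (inverse x) * \<delta> x * inverse x)"
    using False by (metis add_eq_0_iff mult.assoc right_inverse mult_1_right distrib_right minus_mult_left mult_zero_left)
  have si: "\<sigma> (inverse x) * \<sigma> x = 1" using s_inv False by simp
  have "\<sigma> (inverse x) * a + \<delta> (inverse x) = \<sigma> (inverse x) * (a * x - \<delta> x) * inverse x"
    using False by (simp add: dinv algebra_simps)
  also have "\<dots> = \<sigma> (inverse x) * \<sigma> x * a * inverse x" by (simp add: xe[symmetric] mult.assoc)
  finally show ?thesis by (simp add: cent_iff si)
qed (simp add: cent_zero)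

end

subsection \<open>Linear algebra over a skew subfield\<close>

definition subf :: "'a::division_ring set \<Rightarrow> bool" where
  "subf F \<longleftrightarrow> 0 \<in> F \<and> 1 \<in> F \<and> (\<forall>x\<in>F. \<forall>y\<in>F. x + y \<in> F \<and> x * y \<in> F) \<and>
     (\<forall>x\<in>F. - x \<in> F \<and> inverse x \<in> F)"

definition lin :: "'a::division_ring set \<Rightarrow> ('b \<Rightarrow> 'a) \<Rightarrow> 'b set \<Rightarrow> 'a \<Rightarrow> bool" where
  "lin F v I x \<longleftrightarrow> (\<exists>c. (\<forall>i\<in>I. c i \<in> F) \<and> x = (\<Sum>i\<in>I. v i * c i))"

definition indep :: "'a::division_ring set \<Rightarrow> ('b \<Rightarrow> 'a) \<Rightarrow> 'b set \<Rightarrow> bool" where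
  "indep F w J \<longleftrightarrow> (\<forall>c. (\<forall>j\<in>J. c j \<in> F) \<and> (\<Sum>j\<in>J. w j * c j) = 0 \<longrightarrow> (\<forall>j\<in>J. c j = 0))"

lemma subf_sum: "subf F \<Longrightarrow> (\<And>x. x \<in> A \<Longrightarrow> f x \<in> F) \<Longrightarrow> sum f A \<in> F"
  by (induction A rule: infinite_finite_induct) (auto simp: subf_def)

lemma steinitz:
  assumes F: "subf F"
  shows "finite I \<Longrightarrow> card I = n \<Longrightarrow> finite J \<Longrightarrow> n < card J \<Longrightarrow> (\<forall>j\<in>J. lin F v I (w j)) \<Longrightarrow> \<not> indep F w J"
proof (induction n arbitrary: I J w)
  case 0
  then have I: "I = {}" by simp
  obtain j0 where j0: "j0 \<in> J" using 0 by fastforce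
  have w0: "w j0 = 0" using 0(5) j0 by (simp add: I lin_def)
  let ?c = "\<lambda>j. if j = j0 then (1::'a) else 0"
  have "(\<Sum>j\<in>J. w j * ?c j) = 0"
    using 0(3) j0 w0 by (simp add: if_distrib cong: if_cong)
  moreover have "\<forall>j\<in>J. ?c j \<in> F" using F by (simp add: subf_def)
  ultimately have cz: "\<forall>j\<in>J. ?c j = 0" if "indep F w J"
    using that[unfolded indep_def, rule_format, of ?c] by blast
  show ?case using cz j0 by fastforce
next
  case (Suc n)
  obtain i0 where i0: "i0 \<in> I" using Suc.prems by fastforce
  define I' where "I' = I - {i0}"
  have I': "finite I'" "card I' = n" using Suc.prems i0 by (auto simp: I'_def)
  have split: "(\<Sum>i\<in>I. f i) = f i0 + (\<Sum>i\<in>I'. f i)" for f :: "_ \<Rightarrow> 'a"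
    using Suc.prems(1) i0 unfolding I'_def by (simp add: sum.remove)
  from Suc.prems(5) obtain C where C: "\<forall>j\<in>J. (\<forall>i\<in>I. C j i \<in> F) \<and> w j = (\<Sum>i\<in>I. v i * C j i)"
    unfolding lin_def by metis
  show ?case
  proof (cases "\<forall>j\<in>J. C j i0 = 0")
    case True
    have "\<forall>j\<in>J. lin F v I' (w j)"
    proof
      fix j assume j: "j \<in> J"
      have "w j = (\<Sum>i\<in>I'. v i * C j i)" using C j True split by simp
      moreover have "\<forall>i\<in>I'. C j i \<in> F" using C j by (auto simp: I'_def)
      ultimately show "lin F v I' (w j)" unfolding lin_def by blast
    qed
    then show ?thesis using Suc.IH[OF I'] Suc.prems by simp
  next
    case False
    then obtain j0 where j0: "j0 \<in> J" "C j0 i0 \<noteq> 0" by blast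
    define J' where "J' = J - {j0}"
    have J': "finite J'" "n < card J'" using Suc.prems j0 by (auto simp: J'_def)
    define t where "t j = inverse (C j0 i0) * C j i0" for j
    define w' where "w' j = w j - w j0 * t j" for j
    have tF: "t j \<in> F" if "j \<in> J" for j
      using F C that j0 i0 by (simp add: t_def subf_def)
    have "\<forall>j\<in>J'. lin F v I' (w' j)"
    proof
      fix j assume j: "j \<in> J'"
      then have jJ: "j \<in> J" by (simp add: J'_def)
      define D where "D i = C j i - C j0 i * t j" for i
      have ct: "C j0 i0 * t j = C j i0" using j0 by (simp add: t_def mult.assoc[symmetric])
      have "w' j = v i0 * C j i0 + (\<Sum>i\<in>I'. v i * C j i) - (v i0 * C j0 i0 + (\<Sum>i\<in>I'. v i * C j0 i)) * t j"
        using C jJ j0 by (simp add: w'_def split)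
      also have "\<dots> = (\<Sum>i\<in>I'. v i * C j i) - (\<Sum>i\<in>I'. v i * C j0 i) * t j"
        by (simp add: algebra_simps ct)
      also have "\<dots> = (\<Sum>i\<in>I'. v i * D i)"
        by (simp add: D_def sum_distrib_right sum_subtractf algebra_simps)
      finally have "w' j = (\<Sum>i\<in>I'. v i * D i)" .
      moreover have "\<forall>i\<in>I'. D i \<in> F"
      proof
        fix i assume "i \<in> I'"
        then have i: "i \<in> I" by (simp add: I'_def)
        have a: "C j i \<in> F" "C j0 i * t j \<in> F"
          using F C jJ j0 tF[OF jJ] i unfolding subf_def by blast+
        then have "C j i + - (C j0 i * t j) \<in> F" using F unfolding subf_def by blast
        moreover have "D i = C j i + - (C j0 i * t j)" by (simp add: D_def)
        ultimately show "D i \<in> F" by simp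
      qed
      ultimately show "lin F v I' (w' j)" unfolding lin_def by blast
    qed
    then have "\<not> indep F w' J'" using Suc.IH[OF I'(1) I'(2) J'] by simp
    then obtain d where d: "\<forall>j\<in>J'. d j \<in> F" "(\<Sum>j\<in>J'. w' j * d j) = 0" "\<exists>j\<in>J'. d j \<noteq> 0"
      unfolding indep_def by blast
    define S where "S = (\<Sum>k\<in>J'. t k * d k)"
    define c where "c j = (if j = j0 then - S else d j)" for j
    have "(\<Sum>j\<in>J'. w' j * d j) = (\<Sum>j\<in>J'. w j * d j) - w j0 * S"
      by (simp add: w'_def S_def algebra_simps sum_subtractf sum_distrib_left)
    moreover have "(\<Sum>j\<in>J. w j * c j) = w j0 * c j0 + (\<Sum>j\<in>J'. w j * c j)"
      using Suc.prems(3) j0 unfolding J'_def by (simp add: sum.remove)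
    moreover have "(\<Sum>j\<in>J'. w j * c j) = (\<Sum>j\<in>J'. w j * d j)"
      by (rule sum.cong) (auto simp: c_def J'_def)
    ultimately have "(\<Sum>j\<in>J. w j * c j) = 0" using d(2) by (simp add: c_def algebra_simps)
    moreover have "\<forall>j\<in>J. c j \<in> F"
    proof
      fix j assume "j \<in> J"
      have "S \<in> F" unfolding S_def
        by (rule subf_sum[OF F]) (use F d(1) tF in \<open>auto simp: J'_def subf_def\<close>)
      then show "c j \<in> F" using F d(1) \<open>j \<in> J\<close> by (auto simp: c_def J'_def subf_def)
    qed
    ultimately have cz: "\<forall>j\<in>J. c j = 0" if "indep F w J"
      using that[unfolded indep_def, rule_format, of c] by blast
    moreover have "\<exists>j\<in>J. c j \<noteq> 0" using d(3) by (auto simp: c_def J'_def)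
    ultimately show ?thesis by blast
  qed
qed


lemma inj_surj:
  assumes F: "subf F" and B: "finite B" "\<forall>x. lin F (\<lambda>b. b) B x"
    and add: "\<And>x y. L (x + y) = L x + L y"
    and lf: "\<And>x d. d \<in> F \<Longrightarrow> L (x * d) = L x * (d::'a::division_ring)"
    and inj0: "\<And>x. L x = 0 \<Longrightarrow> x = 0"
  shows "\<exists>x. L x = y"
proof (rule ccontr)
  assume ny: "\<not> (\<exists>x. L x = y)"
  have L0: "L 0 = 0" using add[of 0 0] by simp
  have Lneg: "L (- x) = - L x" for x using add[of x "-x"] L0 by (simp add: minus_unique)
  have Lsum: "L (sum f A) = (\<Sum>x\<in>A. L (f x))" for f :: "'b \<Rightarrow> 'a" and A
    by (induction A rule: infinite_finite_induct) (auto simp: add L0)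
  have injL: "inj L"
  proof (rule injI)
    fix x x' assume "L x = L x'"
    then have "L (x + - x') = 0" using add[of x "-x'"] Lneg[of x'] by simp
    then show "x = x'" using inj0 by (metis add.commute add_minus_cancel add_0_right)
  qed
  have bound: "card J \<le> card B" if "finite J" "indep F (\<lambda>x. x) J" for J
    using steinitz[OF F B(1) refl that(1), of "\<lambda>x. x" "\<lambda>x. x"] B(2) that(2) by fastforce
  define S where "S = {card J | J. finite J \<and> indep F (\<lambda>x. x) J}"
  have finS: "finite S" by (rule finite_subset[of _ "{..card B}"]) (auto simp: S_def bound)
  have "0 \<in> S" unfolding S_def indep_def by (rule CollectI, rule exI[of _ "{}"]) simp
  then have "Max S \<in> S" using finS Max_in by blast
  then obtain E where E: "finite E" "indep F (\<lambda>x. x) E" "card E = Max S" by (auto simp: S_def)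
  define E' where "E' = insert y (L ` E)"
  have yn: "y \<notin> L ` E" using ny by blast
  have cardE': "card E' = Suc (Max S)"
    unfolding E'_def using E yn card_image[OF inj_on_subset[OF injL]] by simp
  have "indep F (\<lambda>x. x) E'"
    unfolding indep_def
  proof (intro allI impI)
    fix c assume h: "(\<forall>j\<in>E'. c j \<in> F) \<and> (\<Sum>j\<in>E'. j * c j) = 0"
    define u where "u = (\<Sum>e\<in>E. e * c (L e))"
    have "(\<Sum>j\<in>L ` E. j * c j) = (\<Sum>e\<in>E. L e * c (L e))"
      by (subst sum.reindex) (auto intro: inj_on_subset[OF injL])
    also have "\<dots> = L u" unfolding u_def Lsum using h by (auto simp: E'_def lf intro!: sum.cong)
    finally have "(\<Sum>j\<in>L ` E. j * c j) = L u" .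
    then have eq: "y * c y + L u = 0" using h E(1) yn by (simp add: E'_def)
    have cy: "c y = 0"
    proof (rule ccontr)
      assume nz: "c y \<noteq> 0"
      have icF: "inverse (c y) \<in> F" using h F by (auto simp: E'_def subf_def)
      have "y * c y = - L u" using eq by (simp add: eq_neg_iff_add_eq_0)
      then have "y = - L u * inverse (c y)" using nz
        by (metis mult.assoc right_inverse mult_1_right)
      also have "\<dots> = L (- u * inverse (c y))" by (simp add: lf[OF icF] Lneg)
      finally show False using ny by metis
    qed
    then have "L u = 0" using eq by simp
    then have "u = 0" by (rule inj0)
    then have "\<forall>e\<in>E. c (L e) = 0"
      using E(2)[unfolded indep_def, rule_format, of "\<lambda>e. c (L e)"] h by (auto simp: u_def E'_def)
    then show "\<forall>j\<in>E'. c j = 0" using cy by (auto simp: E'_def)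
  qed
  moreover have "finite E'" using E(1) by (simp add: E'_def)
  ultimately have "Suc (Max S) \<in> S" unfolding S_def
    by (intro CollectI exI[of _ E']) (simp add: cardE' S_def)
  then have "Suc (Max S) \<le> Max S" using finS by simp
  then show False by simp
qed

context sd
begin

definition Lam :: "'a \<Rightarrow> 'a poly \<Rightarrow> 'a \<Rightarrow> 'a" where
  "Lam a P c = (\<Sum>k\<le>degree P. coeff P k * (th a ^^ k) c)"

lemma Lam_eq: "c \<noteq> 0 \<Longrightarrow> ev (sd_act \<sigma> \<delta> c a) P * c = Lam a P c"
  by (simp add: ev_def Lam_def sum_distrib_right mult.assoc N_def thp_act)

lemma Lam_add: "Lam a P (x + y) = Lam a P x + Lam a P y"
  by (simp add: Lam_def thp_add distrib_left sum.distrib)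

lemma Lam_lin: "d \<in> centralizer \<sigma> \<delta> a \<Longrightarrow> Lam a P (x * d) = Lam a P x * d"
  by (simp add: Lam_def thp_cent sum_distrib_right mult.assoc)

lemma Lam_zero: "Lam a P 0 = 0"
  by (simp add: Lam_def)

lemma subf_cent: "subf (centralizer \<sigma> \<delta> a)"
  by (simp add: subf_def cent_zero cent_one cent_add cent_mult cent_uminus cent_inverse)

theorem main_sd:
  assumes fd: "fin_dim_right_over (centralizer \<sigma> \<delta> a)"
  shows "defined_at \<sigma> \<delta> P a \<longleftrightarrow> (\<forall>c\<in>conj_class \<sigma> \<delta> a. skeval \<sigma> \<delta> P c \<noteq> 0)"
proof
  assume "defined_at \<sigma> \<delta> P a"
  then obtain g where g: "\<forall>z\<in>conj_class \<sigma> \<delta> a. skew_prod \<sigma> \<delta> (skeval \<sigma> \<delta> P) g z = 1 \<and> skew_prod \<sigma> \<delta> g (skeval \<sigma> \<delta> P) z = 1"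
    unfolding defined_at_def skew_invertible_on_def by blast
  show "\<forall>c\<in>conj_class \<sigma> \<delta> a. skeval \<sigma> \<delta> P c \<noteq> 0"
  proof
    fix c assume "c \<in> conj_class \<sigma> \<delta> a"
    with g have "skew_prod \<sigma> \<delta> g (skeval \<sigma> \<delta> P) c = 1" by blast
    then show "skeval \<sigma> \<delta> P c \<noteq> 0" by (auto simp: skew_prod_def split: if_splits)
  qed
next
  assume nz: "\<forall>c\<in>conj_class \<sigma> \<delta> a. skeval \<sigma> \<delta> P c \<noteq> 0"
  define f where "f z = ev z P" for z
  have fs: "skeval \<sigma> \<delta> P = f" by (simp add: fun_eq_iff f_def skeval_ev)
  have nz': "f (sd_act \<sigma> \<delta> c a) \<noteq> 0" if "c \<noteq> 0" for c
    using nz that by (auto simp: fs conj_class_def)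
  have inj0: "x = 0" if "Lam a P x = 0" for x
  proof (rule ccontr)
    assume "x \<noteq> 0"
    then have "f (sd_act \<sigma> \<delta> x a) * x \<noteq> 0" using nz' by simp
    then show False using Lam_eq[OF \<open>x \<noteq> 0\<close>] that by (simp add: f_def)
  qed
  obtain B where B: "finite B" "\<forall>x. lin (centralizer \<sigma> \<delta> a) (\<lambda>b. b) B x"
    using fd unfolding fin_dim_right_over_def lin_def by blast
  have surj: "\<exists>x. Lam a P x = y" for y
    by (rule inj_surj[OF subf_cent B]) (auto simp: Lam_add Lam_lin inj0)
  have Lf: "Lam a P c = f (sd_act \<sigma> \<delta> c a) * c" if "c \<noteq> 0" for c
    using Lam_eq[OF that] by (simp add: f_def)
  have ex: "\<exists>h. h \<noteq> 0 \<and> f (sd_act \<sigma> \<delta> h u) * h = 1" if uc: "u \<in> conj_class \<sigma> \<delta> a" for u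
  proof -
    obtain e where e: "e \<noteq> 0" "u = sd_act \<sigma> \<delta> e a" using uc unfolding conj_class_def by blast
    obtain y where y: "Lam a P y = e" using surj by blast
    have y0: "y \<noteq> 0" using y e Lam_zero by auto
    define h where "h = y * inverse e"
    have h0: "h \<noteq> 0" using y0 e by (simp add: h_def)
    have he: "h * e = y" using e by (simp add: h_def mult.assoc)
    have "sd_act \<sigma> \<delta> h u = sd_act \<sigma> \<delta> y a" using act_comp[OF h0 e(1)] he e by simp
    then have "f (sd_act \<sigma> \<delta> h u) * h = f (sd_act \<sigma> \<delta> y a) * y * inverse e"
      by (simp add: h_def mult.assoc)
    also have "\<dots> = 1" using Lf[OF y0] y e by simp
    finally show ?thesis using h0 by blast
  qed
  have uq: "h = h'" if uc: "u \<in> conj_class \<sigma> \<delta> a" "h \<noteq> 0" "f (sd_act \<sigma> \<delta> h u) * h = 1"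
    "h' \<noteq> 0" "f (sd_act \<sigma> \<delta> h' u) * h' = 1" for u h h'
  proof -
    obtain e where e: "e \<noteq> 0" "u = sd_act \<sigma> \<delta> e a" using uc by (auto simp: conj_class_def)
    have "Lam a P (h * e) = e"
      using Lf[of "h * e"] that(2,3) e act_comp[OF that(2) e(1)] by (simp add: mult.assoc[symmetric])
    moreover have "Lam a P (h' * e) = e"
      using Lf[of "h' * e"] that(4,5) e act_comp[OF that(4) e(1)] by (simp add: mult.assoc[symmetric])
    ultimately have "Lam a P (h * e + - (h' * e)) = 0"
      by (metis Lam_add add.right_inverse Lam_zero add_left_cancel)
    then have "h * e = h' * e" using inj0 by (metis add.commute add_minus_cancel add_0_right)
    then show ?thesis using e(1) by simp
  qed
  define g where "g z = (SOME h. h \<noteq> 0 \<and> f (sd_act \<sigma> \<delta> h z) * h = 1)" for z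
  have g: "g z \<noteq> 0 \<and> f (sd_act \<sigma> \<delta> (g z) z) * g z = 1" if "z \<in> conj_class \<sigma> \<delta> a" for z
    unfolding g_def by (rule someI_ex[OF ex[OF that]])
  show "defined_at \<sigma> \<delta> P a"
    unfolding defined_at_def skew_invertible_on_def fs
  proof (intro exI[of _ g] ballI conjI)
    fix z assume z: "z \<in> conj_class \<sigma> \<delta> a"
    show "skew_prod \<sigma> \<delta> f g z = 1" using g[OF z] by (simp add: skew_prod_def)
    obtain e where e: "e \<noteq> 0" "z = sd_act \<sigma> \<delta> e a" using z by (auto simp: conj_class_def)
    have fz: "f z \<noteq> 0" using nz' e by simp
    define u where "u = sd_act \<sigma> \<delta> (f z) z"
    have u: "u \<in> conj_class \<sigma> \<delta> a"
      using act_comp[OF fz e(1)] fz e by (auto simp: u_def conj_class_def)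
    have i0: "inverse (f z) \<noteq> 0" using fz by simp
    have zback: "sd_act \<sigma> \<delta> (inverse (f z)) u = z"
      using act_comp[OF i0 fz] fz by (simp add: u_def act_one)
    have "inverse (f z) = g u"
      by (rule uq[OF u i0 _ conjunct1[OF g[OF u]] conjunct2[OF g[OF u]]]) (simp add: zback fz)
    then have "g u = inverse (f z)" by simp
    then show "skew_prod \<sigma> \<delta> g f z = 1" using fz by (simp add: skew_prod_def u_def[symmetric])
  qed
qed

end


theorem proposition3p4:
  fixes \<sigma> \<delta> :: "'a::division_ring \<Rightarrow> 'a" and a :: 'a and P Q :: "'a poly"
  assumes "ring_endo \<sigma>"
    and "sigma_derivation \<sigma> \<delta>"
    and "fin_dim_right_over (centralizer \<sigma> \<delta> a)"
    and "minimal_rep \<sigma> \<delta> P Q"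
  shows "defined_at \<sigma> \<delta> P a \<longleftrightarrow> (\<forall>c\<in>conj_class \<sigma> \<delta> a. skeval \<sigma> \<delta> P c \<noteq> 0)"
proof -
  interpret sd \<sigma> \<delta> using assms(1,2) by unfold_locales
  show ?thesis by (rule main_sd[OF assms(3)])
qed

end
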